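(* If a series $\sum u_n$ of fuzzy numbers converges to a fuzzy number $\nu$, then it is $E_p$ summable to $\nu$.
   Context: $E^1$ denotes the space of fuzzy numbers (normal, fuzzy convex, upper semi-continuous fuzzy sets on $\mathbb{R}$ with compact support), with addition and scalar multiplication defined levelwise on $\alpha$-level sets $[u]_\alpha=[u^-_\alpha,u^+_\alpha]$, and metric $D(u,v)=\sup_{\alpha\in[0,1]}\max\{|u^-_\alpha-v^-_\alpha|,|u^+_\alpha-v^+_\alpha|\}$. For a series $\sum u_n$ of fuzzy numbers let $s_n=\sum_{k=0}^n u_k$; the series converges to $\nu\in E^1$ if $D(s_n,\nu)\to 0$. For $p>0$, a sequence $(s_n)$ of fuzzy numbers has Euler means $t^p_n=\frac{1}{(p+1)^n}\sum_{k=0}^n\binom{n}{k}p^{n-k}s_k$, and is $E_p$ summable to $\nu$ if $t^p_n\to\nu$ in $D$. A series $\sum u_n$ of fuzzy numbers is $E_p$ summable to $\nu$ if its sequence of partial sums $(s_n)$ is $E_p$ summable to $\nu$. *)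

theory Defs
  imports "HOL-Analysis.Analysis"
begin

type_synonym fuzzy = "real \<Rightarrow> real"

definition usc :: "fuzzy \<Rightarrow> bool" where
  "usc u \<longleftrightarrow> (\<forall>x. \<forall>e>0. \<exists>d>0. \<forall>y. \<bar>y - x\<bar> < d \<longrightarrow> u y < u x + e)"

definition fuzzy_number :: "fuzzy \<Rightarrow> bool" where
  "fuzzy_number u \<longleftrightarrow>
     (\<forall>x. 0 \<le> u x \<and> u x \<le> 1) \<and>
     (\<exists>x. u x = 1) \<and>
     (\<forall>x y l. 0 \<le> l \<and> l \<le> 1 \<longrightarrow> min (u x) (u y) \<le> u (l * x + (1 - l) * y)) \<and>
     usc u \<and>
     compact (closure {x. 0 < u x})"

definition level :: "fuzzy \<Rightarrow> real \<Rightarrow> real set" where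
  "level u a = (if 0 < a then {x. a \<le> u x} else closure {x. 0 < u x})"

definition lower :: "fuzzy \<Rightarrow> real \<Rightarrow> real" where
  "lower u a = Inf (level u a)"

definition upper :: "fuzzy \<Rightarrow> real \<Rightarrow> real" where
  "upper u a = Sup (level u a)"

text \<open>Levelwise addition: the fuzzy set whose alpha-levels are [u]_alpha + [v]_alpha.\<close>
definition fadd :: "fuzzy \<Rightarrow> fuzzy \<Rightarrow> fuzzy" (infixl "\<oplus>" 65) where
  "u \<oplus> v = (\<lambda>z. Sup ({0} \<union> {a \<in> {0<..1}. z \<in> {x + y | x y. x \<in> level u a \<and> y \<in> level v a}}))"

text \<open>Levelwise scalar multiplication: alpha-levels c [u]_alpha.\<close>
definition fscale :: "real \<Rightarrow> fuzzy \<Rightarrow> fuzzy" (infixr "\<odot>" 70) where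
  "c \<odot> u = (\<lambda>z. Sup ({0} \<union> {a \<in> {0<..1}. z \<in> (\<lambda>x. c * x) ` level u a}))"

definition fdist :: "fuzzy \<Rightarrow> fuzzy \<Rightarrow> real" where
  "fdist u v = Sup ((\<lambda>a. max \<bar>lower u a - lower v a\<bar> \<bar>upper u a - upper v a\<bar>) ` {0..1})"

fun fsum :: "(nat \<Rightarrow> fuzzy) \<Rightarrow> nat \<Rightarrow> fuzzy" where
  "fsum f 0 = f 0"
| "fsum f (Suc n) = fsum f n \<oplus> f (Suc n)"

definition partial_sums :: "(nat \<Rightarrow> fuzzy) \<Rightarrow> nat \<Rightarrow> fuzzy" where
  "partial_sums u n = fsum u n"

definition euler_mean :: "real \<Rightarrow> (nat \<Rightarrow> fuzzy) \<Rightarrow> nat \<Rightarrow> fuzzy" where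
  "euler_mean p s n = (1 / (p + 1) ^ n) \<odot> fsum (\<lambda>k. (real (n choose k) * p ^ (n - k)) \<odot> s k) n"

definition fconverges :: "(nat \<Rightarrow> fuzzy) \<Rightarrow> fuzzy \<Rightarrow> bool" where
  "fconverges s v \<longleftrightarrow> (\<lambda>n. fdist (s n) v) \<longlonglongrightarrow> 0"

definition series_converges :: "(nat \<Rightarrow> fuzzy) \<Rightarrow> fuzzy \<Rightarrow> bool" where
  "series_converges u v \<longleftrightarrow> fconverges (partial_sums u) v"

definition euler_summable_series :: "real \<Rightarrow> (nat \<Rightarrow> fuzzy) \<Rightarrow> fuzzy \<Rightarrow> bool" where
  "euler_summable_series p u v \<longleftrightarrow> fconverges (euler_mean p (partial_sums u)) v"

end

theory Submission
  imports Defs "HOL-Real_Asymp.Real_Asymp"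
begin


definition QQ :: "(real\<Rightarrow>real) \<Rightarrow> (real\<Rightarrow>real) \<Rightarrow> bool" where
 "QQ F G \<longleftrightarrow> (\<forall>a\<in>{0<..1}. F a \<le> G a) \<and>
   (\<forall>a b. 0<a \<longrightarrow> a\<le>b \<longrightarrow> b\<le>1 \<longrightarrow> F a \<le> F b \<and> G b \<le> G a) \<and>
   (\<exists>B. \<forall>a\<in>{0<..1}. -B \<le> F a \<and> G a \<le> B) \<and>
   (\<forall>a\<in>{0<..1}. \<forall>e>0. \<exists>b. 0<b \<and> b<a \<and> F a < F b + e \<and> G b < G a + e)"

lemma memb_level:
  assumes Q: "QQ F G" and w: "\<And>z. w z = Sup ({0} \<union> {b\<in>{0<..1}. F b \<le> z \<and> z \<le> G b})"
    and a: "0 < a" "a \<le> 1"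
  shows "level w a = {F a..G a}"
proof -
  define S where "S z = {0} \<union> {b\<in>{0<..1}. F b \<le> z \<and> z \<le> G b}" for z
  have bdd: "bdd_above (S z)" for z unfolding S_def by (rule bdd_aboveI[of _ 1]) auto
  have ne: "S z \<noteq> {}" for z unfolding S_def by auto
  have mono: "\<And>a b. 0<a \<Longrightarrow> a\<le>b \<Longrightarrow> b\<le>1 \<Longrightarrow> F a \<le> F b \<and> G b \<le> G a"
    and lc: "\<And>a e. a\<in>{0<..1} \<Longrightarrow> e>0 \<Longrightarrow> \<exists>b. 0<b \<and> b<a \<and> F a < F b + e \<and> G b < G a + e"
    using Q unfolding QQ_def by blast+
  have "z \<in> {F a..G a} \<longleftrightarrow> a \<le> Sup (S z)" for z
  proof
    assume "z \<in> {F a..G a}"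
    then have "a \<in> S z" using a unfolding S_def by auto
    then show "a \<le> Sup (S z)" using bdd by (rule cSup_upper)
  next
    assume sup: "a \<le> Sup (S z)"
    have F: "F a \<le> z"
    proof (rule ccontr)
      assume "\<not> F a \<le> z"
      then obtain b where b: "0<b" "b<a" "F a < F b + (F a - z)"
        using lc[of a "F a - z"] a by auto
      have "b < Sup (S z)" using b sup by linarith
      then obtain x where x: "x \<in> S z" "b < x" using less_cSupE[OF _ ne] by blast
      then have "x \<in> {0<..1}" "F x \<le> z" using b unfolding S_def by auto
      then have "F b \<le> F x" using mono[of b x] b x by auto
      then show False using b \<open>F x \<le> z\<close> by linarith
    qed
    have G: "z \<le> G a"
    proof (rule ccontr)
      assume "\<not> z \<le> G a"
      then obtain b where b: "0<b" "b<a" "G b < G a + (z - G a)"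
        using lc[of a "z - G a"] a by auto
      have "b < Sup (S z)" using b sup by linarith
      then obtain x where x: "x \<in> S z" "b < x" using less_cSupE[OF _ ne] by blast
      then have "x \<in> {0<..1}" "z \<le> G x" using b unfolding S_def by auto
      then have "G x \<le> G b" using mono[of b x] b x by auto
      then show False using b \<open>z \<le> G x\<close> by linarith
    qed
    show "z \<in> {F a..G a}" using F G by auto
  qed
  then have iff: "\<And>z. z \<in> {F a..G a} \<longleftrightarrow> a \<le> Sup (S z)" .
  have "level w a = {z. a \<le> Sup (S z)}" using a unfolding level_def S_def w by simp
  then show ?thesis using iff by blast
qed



lemma Inf_closure_real:
  fixes S :: "real set" assumes "S \<noteq> {}" "bdd_below S"
  shows "Inf (closure S) = Inf S"
proof (rule antisym)
  have sub: "closure S \<subseteq> {Inf S..}"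
    by (rule closure_minimal) (use assms cInf_lower in auto)
  have bb: "bdd_below (closure S)" using sub by (auto intro: bdd_belowI)
  show "Inf (closure S) \<le> Inf S"
    using closure_contains_Inf[OF assms] bb by (rule cInf_lower)
  show "Inf S \<le> Inf (closure S)"
    using sub assms(1) closure_subset by (intro cInf_greatest) auto
qed

lemma Sup_closure_real:
  fixes S :: "real set" assumes "S \<noteq> {}" "bdd_above S"
  shows "Sup (closure S) = Sup S"
proof (rule antisym)
  have sub: "closure S \<subseteq> {..Sup S}"
    by (rule closure_minimal) (use assms cSup_upper in auto)
  have bb: "bdd_above (closure S)" using sub by (auto intro: bdd_aboveI)
  show "Sup S \<le> Sup (closure S)"
    using closure_contains_Sup[OF assms] bb by (rule cSup_upper)
  show "Sup (closure S) \<le> Sup S"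
    using sub assms(1) closure_subset by (intro cSup_least) auto
qed

definition good :: "fuzzy \<Rightarrow> (real\<Rightarrow>real) \<Rightarrow> (real\<Rightarrow>real) \<Rightarrow> bool" where
  "good w F G \<longleftrightarrow> QQ F G \<and> (\<forall>a\<in>{0<..1}. level w a = {F a..G a})"

lemma good_lower:
  assumes "good w F G" "0 < a" "a \<le> 1"
  shows "lower w a = F a" "upper w a = G a"
proof -
  have "F a \<le> G a" "level w a = {F a..G a}" using assms unfolding good_def QQ_def by auto
  then show "lower w a = F a" "upper w a = G a" unfolding lower_def upper_def by auto
qed

lemma good_lower0:
  assumes g: "good w F G"
  shows "lower w 0 = Inf (F ` {0<..1})" "upper w 0 = Sup (G ` {0<..1})"
proof -
  have Q: "QQ F G" and lv: "\<And>a. a\<in>{0<..1} \<Longrightarrow> level w a = {F a..G a}" using g unfolding good_def by auto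
  have FG: "\<And>a. a\<in>{0<..1} \<Longrightarrow> F a \<le> G a" using Q unfolding QQ_def by auto
  obtain B where B: "\<And>a. a\<in>{0<..1} \<Longrightarrow> -B \<le> F a \<and> G a \<le> B" using Q unfolding QQ_def by blast
  define U where "U = {x. 0 < w x}"
  have U: "U = (\<Union>a\<in>{0<..1}. {F a..G a})"
  proof -
    have "x \<in> U \<longleftrightarrow> (\<exists>a\<in>{0<..1}. a \<le> w x)" for x
    proof
      assume "x \<in> U" then show "\<exists>a\<in>{0<..1}. a \<le> w x"
        unfolding U_def by (intro bexI[of _ "min (w x) 1"]) auto
    qed (auto simp: U_def)
    moreover have lv': "a \<le> w x \<longleftrightarrow> F a \<le> x \<and> x \<le> G a" if "a\<in>{0<..1}" for a x
    proof -
      have "{x. a \<le> w x} = {F a..G a}" using lv[OF that] that by (simp add: level_def)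
      then show ?thesis by (auto simp: set_eq_iff)
    qed
    ultimately show ?thesis by (auto simp: set_eq_iff; blast)
  qed
  have ne: "U \<noteq> {}" using U FG[of 1] by auto
  have bU: "bdd_below U" "bdd_above U" using U B
    by (auto intro!: bdd_belowI[of _ "-B"] bdd_aboveI[of _ B]; force)+
  have bF: "bdd_below (F ` {0<..1})" using B by (auto intro!: bdd_belowI[of _ "-B"])
  have bG: "bdd_above (G ` {0<..1})" using B by (auto intro!: bdd_aboveI[of _ "B"])
  have l0: "lower w 0 = Inf U" "upper w 0 = Sup U"
    unfolding lower_def upper_def level_def U_def[symmetric]
    using Inf_closure_real[OF ne bU(1)] Sup_closure_real[OF ne bU(2)] by auto
  have "Inf U = Inf (F ` {0<..1})"
  proof (rule antisym)
    show "Inf U \<le> Inf (F ` {0<..1})"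
      by (rule cInf_greatest) (use U FG bU in \<open>auto intro!: cInf_lower\<close>)
    show "Inf (F ` {0<..1}) \<le> Inf U"
    proof (rule cInf_greatest[OF ne])
      fix x assume "x \<in> U"
      then obtain a where a: "a\<in>{0<..1}" "F a \<le> x" using U by auto
      then have "Inf (F ` {0<..1}) \<le> F a" using bF by (intro cInf_lower) auto
      then show "Inf (F ` {0<..1}) \<le> x" using a by linarith
    qed
  qed
  moreover have "Sup U = Sup (G ` {0<..1})"
  proof (rule antisym)
    show "Sup (G ` {0<..1}) \<le> Sup U"
      by (rule cSup_least) (use U FG bU in \<open>auto intro!: cSup_upper\<close>)
    show "Sup U \<le> Sup (G ` {0<..1})"
    proof (rule cSup_least[OF ne])
      fix x assume "x \<in> U"
      then obtain a where a: "a\<in>{0<..1}" "x \<le> G a" using U by auto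
      then have "G a \<le> Sup (G ` {0<..1})" using bG by (intro cSup_upper) auto
      then show "x \<le> Sup (G ` {0<..1})" using a by linarith
    qed
  qed
  ultimately show "lower w 0 = Inf (F ` {0<..1})" "upper w 0 = Sup (G ` {0<..1})" using l0 by auto
qed



lemma QQ_add:
  assumes "QQ F G" "QQ F' G'"
  shows "QQ (\<lambda>a. F a + F' a) (\<lambda>a. G a + G' a)"
proof -
  have m1: "\<And>a b. 0<a \<Longrightarrow> a\<le>b \<Longrightarrow> b\<le>1 \<Longrightarrow> F a \<le> F b \<and> G b \<le> G a"
   and m2: "\<And>a b. 0<a \<Longrightarrow> a\<le>b \<Longrightarrow> b\<le>1 \<Longrightarrow> F' a \<le> F' b \<and> G' b \<le> G' a"
   and l1: "\<And>a e. a\<in>{0<..1} \<Longrightarrow> e>0 \<Longrightarrow> \<exists>b. 0<b \<and> b<a \<and> F a < F b + e \<and> G b < G a + e"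
   and l2: "\<And>a e. a\<in>{0<..1} \<Longrightarrow> e>0 \<Longrightarrow> \<exists>b. 0<b \<and> b<a \<and> F' a < F' b + e \<and> G' b < G' a + e"
   and le: "\<And>a. a\<in>{0<..1} \<Longrightarrow> F a \<le> G a" "\<And>a. a\<in>{0<..1} \<Longrightarrow> F' a \<le> G' a"
    using assms unfolding QQ_def by blast+
  obtain B where B: "\<And>a. a\<in>{0<..1} \<Longrightarrow> -B \<le> F a \<and> G a \<le> B" using assms(1) unfolding QQ_def by blast
  obtain B' where B': "\<And>a. a\<in>{0<..1} \<Longrightarrow> -B' \<le> F' a \<and> G' a \<le> B'" using assms(2) unfolding QQ_def by blast
  have lc: "\<exists>b. 0<b \<and> b<a \<and> F a + F' a < F b + F' b + e \<and> G b + G' b < G a + G' a + e"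
    if a: "a\<in>{0<..1}" and e: "e>0" for a e
  proof -
    obtain b1 where b1: "0<b1" "b1<a" "F a < F b1 + e/2" "G b1 < G a + e/2" using l1[OF a, of "e/2"] e by auto
    obtain b2 where b2: "0<b2" "b2<a" "F' a < F' b2 + e/2" "G' b2 < G' a + e/2" using l2[OF a, of "e/2"] e by auto
    define b where "b = max b1 b2"
    have "F b1 \<le> F b" "G b \<le> G b1" using m1[of b1 b] b1 b2 a unfolding b_def by auto
    moreover have "F' b2 \<le> F' b" "G' b \<le> G' b2" using m2[of b2 b] b1 b2 a unfolding b_def by auto
    ultimately show ?thesis using b1 b2 unfolding b_def
      by (intro exI[of _ "max b1 b2"]) (auto simp: max_def split: if_splits)
  qed
  show ?thesis unfolding QQ_def
  proof (intro conjI)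
    show "\<exists>B. \<forall>a\<in>{0<..1}. - B \<le> F a + F' a \<and> G a + G' a \<le> B"
      using B B' by (intro exI[of _ "B + B'"]) (smt (verit))
  qed (use le m1 m2 lc in \<open>auto intro: add_mono\<close>)
qed

lemma QQ_scale:
  assumes "QQ F G" "0 < c"
  shows "QQ (\<lambda>a. c * F a) (\<lambda>a. c * G a)"
proof -
  have m1: "\<And>a b. 0<a \<Longrightarrow> a\<le>b \<Longrightarrow> b\<le>1 \<Longrightarrow> F a \<le> F b \<and> G b \<le> G a"
   and l1: "\<And>a e. a\<in>{0<..1} \<Longrightarrow> e>0 \<Longrightarrow> \<exists>b. 0<b \<and> b<a \<and> F a < F b + e \<and> G b < G a + e"
   and le: "\<And>a. a\<in>{0<..1} \<Longrightarrow> F a \<le> G a"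
    using assms unfolding QQ_def by blast+
  obtain B where B: "\<And>a. a\<in>{0<..1} \<Longrightarrow> -B \<le> F a \<and> G a \<le> B" using assms(1) unfolding QQ_def by blast
  have lc: "\<exists>b. 0<b \<and> b<a \<and> c * F a < c * F b + e \<and> c * G b < c * G a + e"
    if a: "a\<in>{0<..1}" and e: "e>0" for a e
  proof -
    obtain b where b: "0<b" "b<a" "F a < F b + e/c" "G b < G a + e/c" using l1[OF a, of "e/c"] e assms(2) by auto
    have "c * F a < c * (F b + e/c)" "c * G b < c * (G a + e/c)" using b assms(2) by auto
    moreover have "c * (F b + e/c) = c * F b + e" "c * (G a + e/c) = c * G a + e" using assms(2) by (simp_all add: distrib_left)
    ultimately have "c * F a < c * F b + e" "c * G b < c * G a + e" by linarith+
    then show ?thesis using b by auto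
  qed
  show ?thesis unfolding QQ_def
  proof (intro conjI)
    show "\<exists>Bc. \<forall>a\<in>{0<..1}. - Bc \<le> c * F a \<and> c * G a \<le> Bc"
    proof (intro exI[of _ "c * B"] ballI conjI)
      fix a :: real assume a: "a\<in>{0<..1}"
      have "c * (-B) \<le> c * F a" using mult_left_mono[of "-B" "F a" c] B[OF a] assms(2) by linarith
      then show "- (c * B) \<le> c * F a" by simp
      show "c * G a \<le> c * B" using mult_left_mono[of "G a" B c] B[OF a] assms(2) by linarith
    qed
  next
    show "\<forall>a\<in>{0<..1}. c * F a \<le> c * G a" using le assms(2) by simp
  next
    show "\<forall>a b. 0 < a \<longrightarrow> a \<le> b \<longrightarrow> b \<le> 1 \<longrightarrow> c * F a \<le> c * F b \<and> c * G b \<le> c * G a"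
    proof (intro allI impI)
      fix a b :: real assume "0 < a" "a \<le> b" "b \<le> 1"
      then have "F a \<le> F b \<and> G b \<le> G a" by (rule m1)
      then show "c * F a \<le> c * F b \<and> c * G b \<le> c * G a" using assms(2) by simp
    qed
  next
    show "\<forall>a\<in>{0<..1}. \<forall>e>0. \<exists>b>0. b < a \<and> c * F a < c * F b + e \<and> c * G b < c * G a + e"
      using lc by blast
  qed
qed

lemma mink:
  fixes a b c d :: real assumes "a \<le> b" "c \<le> d"
  shows "{x + y | x y. x \<in> {a..b} \<and> y \<in> {c..d}} = {a+c..b+d}"
proof
  show "{a+c..b+d} \<subseteq> {x + y | x y. x \<in> {a..b} \<and> y \<in> {c..d}}"
  proof
    fix z assume z: "z \<in> {a+c..b+d}"
    define x where "x = max a (z - d)"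
    have "x \<in> {a..b}" "z - x \<in> {c..d}" using z assms unfolding x_def by auto
    then show "z \<in> {x + y | x y. x \<in> {a..b} \<and> y \<in> {c..d}}" by force
  qed
qed auto

lemma good_add:
  assumes "good u F G" "good v F' G'"
  shows "good (u \<oplus> v) (\<lambda>a. F a + F' a) (\<lambda>a. G a + G' a)"
proof -
  have Q: "QQ (\<lambda>a. F a + F' a) (\<lambda>a. G a + G' a)" using assms QQ_add unfolding good_def by blast
  have le: "\<And>a. a\<in>{0<..1} \<Longrightarrow> F a \<le> G a" "\<And>a. a\<in>{0<..1} \<Longrightarrow> F' a \<le> G' a"
    using assms unfolding good_def QQ_def by blast+
  have lv: "\<And>a. a\<in>{0<..1} \<Longrightarrow> level u a = {F a..G a}" "\<And>a. a\<in>{0<..1} \<Longrightarrow> level v a = {F' a..G' a}"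
    using assms unfolding good_def by blast+
  have w: "(u \<oplus> v) z = Sup ({0} \<union> {b\<in>{0<..1}. F b + F' b \<le> z \<and> z \<le> G b + G' b})" for z
  proof -
    have "{a \<in> {0<..1}. z \<in> {x + y | x y. x \<in> level u a \<and> y \<in> level v a}}
       = {b\<in>{0<..1}. F b + F' b \<le> z \<and> z \<le> G b + G' b}"
    proof (rule Collect_cong, rule conj_cong[OF refl])
      fix b :: real assume b: "b \<in> {0<..1}"
      show "z \<in> {x + y | x y. x \<in> level u b \<and> y \<in> level v b} \<longleftrightarrow> F b + F' b \<le> z \<and> z \<le> G b + G' b"
        using lv[OF b] le[OF b] mink[of "F b" "G b" "F' b" "G' b"] by simp
    qed
    then show ?thesis unfolding fadd_def by simp
  qed
  show ?thesis unfolding good_def using Q memb_level[OF Q w] by auto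
qed

lemma good_scale:
  assumes "good u F G" "0 < c"
  shows "good (c \<odot> u) (\<lambda>a. c * F a) (\<lambda>a. c * G a)"
proof -
  have Q: "QQ (\<lambda>a. c * F a) (\<lambda>a. c * G a)" using assms QQ_scale unfolding good_def by blast
  have lv: "\<And>a. a\<in>{0<..1} \<Longrightarrow> level u a = {F a..G a}"
    using assms unfolding good_def by blast+
  have w: "(c \<odot> u) z = Sup ({0} \<union> {b\<in>{0<..1}. c * F b \<le> z \<and> z \<le> c * G b})" for z
  proof -
    have "{a \<in> {0<..1}. z \<in> (\<lambda>x. c * x) ` level u a}
       = {b\<in>{0<..1}. c * F b \<le> z \<and> z \<le> c * G b}"
    proof (rule Collect_cong, rule conj_cong[OF refl])
      fix b :: real assume b: "b \<in> {0<..1}"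
      show "z \<in> (\<lambda>x. c * x) ` level u b \<longleftrightarrow> c * F b \<le> z \<and> z \<le> c * G b"
        using lv[OF b] image_mult_atLeastAtMost[OF assms(2), of "F b" "G b"] by simp
    qed
    then show ?thesis unfolding fscale_def by simp
  qed
  show ?thesis unfolding good_def using Q memb_level[OF Q w] by auto
qed



lemma ge_of_below:
  fixes a t :: real assumes "0 < a" "\<And>b. 0 < b \<Longrightarrow> b < a \<Longrightarrow> b \<le> t" shows "a \<le> t"
proof (rule ccontr)
  assume "\<not> a \<le> t"
  then have "max t 0 < a" using assms(1) by auto
  then obtain b where "max t 0 < b" "b < a" using dense by blast
  then show False using assms(2)[of b] by auto
qed

lemma fn_level:
  assumes fn: "fuzzy_number u" and a: "0 < a" "a \<le> 1"
  shows "level u a = {lower u a..upper u a}" "lower u a \<le> upper u a"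
    "lower u a \<in> closure {x. 0 < u x}" "upper u a \<in> closure {x. 0 < u x}"
proof -
  define L where "L = {x. a \<le> u x}"
  have lv: "level u a = L" unfolding level_def L_def using a by auto
  obtain x0 where "u x0 = 1" using fn unfolding fuzzy_number_def by auto
  then have ne: "L \<noteq> {}" using a unfolding L_def by (auto intro!: exI[of _ x0])
  have sub: "L \<subseteq> closure {x. 0 < u x}" unfolding L_def using a closure_subset by force
  have "bounded (closure {x. 0 < u x})" using fn unfolding fuzzy_number_def by (simp add: compact_imp_bounded)
  then have bL: "bounded L" using sub bounded_subset by blast
  then have bb: "bdd_below L" "bdd_above L" by (auto simp: bounded_imp_bdd_below bounded_imp_bdd_above)
  have usc: "usc u" using fn unfolding fuzzy_number_def by auto
  have "open {x. u x < a}"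
    unfolding open_dist
  proof (intro ballI)
    fix x assume "x \<in> {x. u x < a}"
    then have ux: "u x < a" by simp
    obtain d where d: "d > 0" "\<And>y. \<bar>y - x\<bar> < d \<Longrightarrow> u y < u x + (a - u x)"
      using usc ux unfolding usc_def by (meson diff_gt_0_iff_gt)
    show "\<exists>e>0. \<forall>y. dist y x < e \<longrightarrow> y \<in> {x. u x < a}"
      using d by (intro exI[of _ d]) (auto simp: dist_real_def)
  qed
  moreover have "L = - {x. u x < a}" unfolding L_def by auto
  ultimately have cl: "closed L" by (simp add: closed_def)
  have cv: "convex L" unfolding convex_def
  proof (intro ballI allI impI)
    fix x y and s t :: real assume xy: "x \<in> L" "y \<in> L" and st: "0 \<le> s" "0 \<le> t" "s + t = 1"
    have "min (u x) (u y) \<le> u (s * x + (1 - s) * y)"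
      using fn st unfolding fuzzy_number_def by auto
    moreover have "t = 1 - s" using st by auto
    ultimately show "s *\<^sub>R x + t *\<^sub>R y \<in> L" using xy unfolding L_def by auto
  qed
  then have iv: "is_interval L" by (simp add: is_interval_convex_1)
  have I: "Inf L \<in> L" "Sup L \<in> L" using closed_contains_Inf[OF ne bb(1) cl] closed_contains_Sup[OF ne bb(2) cl] by auto
  have "L = {Inf L..Sup L}"
  proof
    show "L \<subseteq> {Inf L..Sup L}" using bb by (auto intro: cInf_lower cSup_upper)
    have iv1: "\<forall>a\<in>L. \<forall>b\<in>L. \<forall>x. a \<le> x \<longrightarrow> x \<le> b \<longrightarrow> x \<in> L" using iv is_interval_1 by blast
    show "{Inf L..Sup L} \<subseteq> L"
    proof
      fix z assume "z \<in> {Inf L..Sup L}"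
      then have "Inf L \<le> z" "z \<le> Sup L" by auto
      then show "z \<in> L" using iv1 I by blast
    qed
  qed
  then show "level u a = {lower u a..upper u a}" unfolding lower_def upper_def lv by simp
  show "lower u a \<le> upper u a" unfolding lower_def upper_def lv using I bb by (auto intro: cInf_lower)
  show "lower u a \<in> closure {x. 0 < u x}" "upper u a \<in> closure {x. 0 < u x}"
    unfolding lower_def upper_def lv using I sub by auto
qed

lemma good_fn:
  assumes fn: "fuzzy_number u"
  shows "good u (lower u) (upper u)"
proof -
  let ?L = "lower u" and ?R = "upper u"
  have lv: "\<And>a. a \<in> {0<..1} \<Longrightarrow> level u a = {?L a..?R a}" using fn_level[OF fn] by auto
  have le: "\<And>a. a \<in> {0<..1} \<Longrightarrow> ?L a \<le> ?R a" using fn_level[OF fn] by auto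
  have "bounded (closure {x. 0 < u x})" using fn unfolding fuzzy_number_def by (simp add: compact_imp_bounded)
  then obtain B where B: "\<And>x. x \<in> closure {x. 0 < u x} \<Longrightarrow> \<bar>x\<bar> \<le> B" unfolding bounded_real by auto
  have bnd: "\<forall>a\<in>{0<..1}. -B \<le> ?L a \<and> ?R a \<le> B"
  proof
    fix a :: real assume "a \<in> {0<..1}"
    then have "\<bar>?L a\<bar> \<le> B" "\<bar>?R a\<bar> \<le> B" using B fn_level[OF fn] by auto
    then show "-B \<le> ?L a \<and> ?R a \<le> B" by auto
  qed
  have mono: "?L a \<le> ?L b \<and> ?R b \<le> ?R a" if ab: "0<a" "a\<le>b" "b\<le>1" for a b
  proof -
    have "level u b \<subseteq> level u a" using ab unfolding level_def by auto
    then have sub: "{?L b..?R b} \<subseteq> {?L a..?R a}" using lv[of a] lv[of b] ab by auto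
    have "?L b \<le> ?R b" using le[of b] ab by auto
    then show ?thesis using sub by auto
  qed
  have lcL: "\<exists>b. 0<b \<and> b<a \<and> ?L a < ?L b + e" if a: "a\<in>{0<..1}" and e: "e > 0" for a e
  proof (rule ccontr)
    assume "\<not> ?thesis"
    then have H: "\<And>b. 0 < b \<Longrightarrow> b < a \<Longrightarrow> ?L b \<le> ?L a - e" by force
    obtain h where h: "0 < h" "h < e" using e dense by blast
    define x where "x = ?L a - h"
    have bx: "b \<le> u x" if b: "0 < b" "b < a" for b
    proof -
      have "?L b \<le> x" using H[OF b] h unfolding x_def by linarith
      moreover have "?R a \<le> ?R b" using mono[of b a] b a by auto
      then have "x \<le> ?R b" using le[OF a] h unfolding x_def by linarith
      ultimately have "x \<in> level u b" using lv[of b] b a by auto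
      then show ?thesis using b unfolding level_def by auto
    qed
    have "a \<le> u x"
    proof (rule ge_of_below)
      show "0 < a" using a by simp
    next
      fix b :: real assume "0 < b" "b < a" then show "b \<le> u x" by (rule bx)
    qed
    then have "x \<in> level u a" using a unfolding level_def by auto
    then have "?L a \<le> x" using lv[OF a] by auto
    then show False using h unfolding x_def by linarith
  qed
  have lcR: "\<exists>b. 0<b \<and> b<a \<and> ?R b < ?R a + e" if a: "a\<in>{0<..1}" and e: "e > 0" for a e
  proof (rule ccontr)
    assume "\<not> ?thesis"
    then have H: "\<And>b. 0 < b \<Longrightarrow> b < a \<Longrightarrow> ?R a + e \<le> ?R b" by force
    obtain h where h: "0 < h" "h < e" using e dense by blast
    define x where "x = ?R a + h"
    have bx: "b \<le> u x" if b: "0 < b" "b < a" for b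
    proof -
      have "x \<le> ?R b" using H[OF b] h unfolding x_def by linarith
      moreover have "?L b \<le> ?L a" using mono[of b a] b a by auto
      then have "?L b \<le> x" using le[OF a] h unfolding x_def by linarith
      ultimately have "x \<in> level u b" using lv[of b] b a by auto
      then show ?thesis using b unfolding level_def by auto
    qed
    have "a \<le> u x"
    proof (rule ge_of_below)
      show "0 < a" using a by simp
    next
      fix b :: real assume "0 < b" "b < a" then show "b \<le> u x" by (rule bx)
    qed
    then have "x \<in> level u a" using a unfolding level_def by auto
    then have "x \<le> ?R a" using lv[OF a] by auto
    then show False using h unfolding x_def by linarith
  qed
  have lc: "\<exists>b. 0<b \<and> b<a \<and> ?L a < ?L b + e \<and> ?R b < ?R a + e" if a: "a\<in>{0<..1}" and e: "e > 0" for a e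
  proof -
    obtain b1 where b1: "0<b1" "b1<a" "?L a < ?L b1 + e" using lcL[OF a e] by auto
    obtain b2 where b2: "0<b2" "b2<a" "?R b2 < ?R a + e" using lcR[OF a e] by auto
    have "?L b1 \<le> ?L (max b1 b2)" "?R (max b1 b2) \<le> ?R b2"
      using mono[of b1 "max b1 b2"] mono[of b2 "max b1 b2"] b1 b2 a by auto
    then show ?thesis using b1 b2 by (intro exI[of _ "max b1 b2"]) auto
  qed
  have "QQ ?L ?R" unfolding QQ_def using le mono bnd lc by blast
  then show ?thesis unfolding good_def using lv by blast
qed



lemma Inf_diff_le:
  fixes f g :: "real \<Rightarrow> real"
  assumes "A \<noteq> {}" "bdd_below (f ` A)" "bdd_below (g ` A)" "\<And>a. a \<in> A \<Longrightarrow> \<bar>f a - g a\<bar> \<le> M"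
  shows "\<bar>Inf (f ` A) - Inf (g ` A)\<bar> \<le> M"
proof -
  have "Inf (f ` A) - M \<le> Inf (g ` A)"
  proof (rule cInf_greatest)
    fix y assume "y \<in> g ` A" then obtain a where a: "a \<in> A" "y = g a" by auto
    have "Inf (f ` A) \<le> f a" using a assms(2) by (auto intro: cInf_lower)
    then show "Inf (f ` A) - M \<le> y" using assms(4)[OF a(1)] a by linarith
  qed (use assms in auto)
  moreover have "Inf (g ` A) - M \<le> Inf (f ` A)"
  proof (rule cInf_greatest)
    fix y assume "y \<in> f ` A" then obtain a where a: "a \<in> A" "y = f a" by auto
    have "Inf (g ` A) \<le> g a" using a assms(3) by (auto intro: cInf_lower)
    then show "Inf (g ` A) - M \<le> y" using assms(4)[OF a(1)] a by linarith
  qed (use assms in auto)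
  ultimately show ?thesis by linarith
qed

lemma Sup_diff_le:
  fixes f g :: "real \<Rightarrow> real"
  assumes "A \<noteq> {}" "bdd_above (f ` A)" "bdd_above (g ` A)" "\<And>a. a \<in> A \<Longrightarrow> \<bar>f a - g a\<bar> \<le> M"
  shows "\<bar>Sup (f ` A) - Sup (g ` A)\<bar> \<le> M"
proof -
  have "Sup (f ` A) \<le> Sup (g ` A) + M"
  proof (rule cSup_least)
    fix y assume "y \<in> f ` A" then obtain a where a: "a \<in> A" "y = f a" by auto
    have "g a \<le> Sup (g ` A)" using a assms(3) by (auto intro: cSup_upper)
    then show "y \<le> Sup (g ` A) + M" using assms(4)[OF a(1)] a by linarith
  qed (use assms in auto)
  moreover have "Sup (g ` A) \<le> Sup (f ` A) + M"
  proof (rule cSup_least)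
    fix y assume "y \<in> g ` A" then obtain a where a: "a \<in> A" "y = g a" by auto
    have "f a \<le> Sup (f ` A)" using a assms(2) by (auto intro: cSup_upper)
    then show "y \<le> Sup (f ` A) + M" using assms(4)[OF a(1)] a by linarith
  qed (use assms in auto)
  ultimately show ?thesis by linarith
qed

lemma QQ_bounds:
  assumes "QQ F G"
  shows "bdd_below (F ` {0<..1})" "bdd_above (G ` {0<..1})"
    "\<exists>B. \<forall>a\<in>{0<..1}. \<bar>F a\<bar> \<le> B \<and> \<bar>G a\<bar> \<le> B"
proof -
  obtain B where B: "\<And>a. a\<in>{0<..1} \<Longrightarrow> -B \<le> F a \<and> G a \<le> B" using assms unfolding QQ_def by blast
  have le: "\<And>a. a\<in>{0<..1} \<Longrightarrow> F a \<le> G a" using assms unfolding QQ_def by blast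
  show "bdd_below (F ` {0<..1})" using B by (auto intro!: bdd_belowI[of _ "-B"])
  show "bdd_above (G ` {0<..1})" using B by (auto intro!: bdd_aboveI[of _ "B"])
  show "\<exists>B. \<forall>a\<in>{0<..1}. \<bar>F a\<bar> \<le> B \<and> \<bar>G a\<bar> \<le> B"
  proof (intro exI[of _ B] ballI)
    fix a :: real assume a: "a \<in> {0<..1}"
    show "\<bar>F a\<bar> \<le> B \<and> \<bar>G a\<bar> \<le> B" using B[OF a] le[OF a] by auto
  qed
qed

lemma fdist_le:
  assumes g1: "good w F G" and g2: "good w' F' G'"
    and M: "\<And>a. a\<in>{0<..1} \<Longrightarrow> \<bar>F a - F' a\<bar> \<le> M \<and> \<bar>G a - G' a\<bar> \<le> M"
  shows "fdist w w' \<le> M"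
  unfolding fdist_def
proof (rule cSup_least)
  show "(\<lambda>a. max \<bar>lower w a - lower w' a\<bar> \<bar>upper w a - upper w' a\<bar>) ` {0..1} \<noteq> {}" by auto
next
  have Q1: "QQ F G" and Q2: "QQ F' G'" using g1 g2 unfolding good_def by auto
  fix x assume "x \<in> (\<lambda>a. max \<bar>lower w a - lower w' a\<bar> \<bar>upper w a - upper w' a\<bar>) ` {0..1}"
  then obtain a where a: "a \<in> {0..1}" "x = max \<bar>lower w a - lower w' a\<bar> \<bar>upper w a - upper w' a\<bar>" by auto
  show "x \<le> M"
  proof (cases "a = 0")
    case True
    have "\<bar>Inf (F ` {0<..1}) - Inf (F' ` {0<..1})\<bar> \<le> M"
      using M QQ_bounds[OF Q1] QQ_bounds[OF Q2] by (intro Inf_diff_le) auto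
    moreover have "\<bar>Sup (G ` {0<..1}) - Sup (G' ` {0<..1})\<bar> \<le> M"
      using M QQ_bounds[OF Q1] QQ_bounds[OF Q2] by (intro Sup_diff_le) auto
    ultimately show ?thesis using a True good_lower0[OF g1] good_lower0[OF g2] by auto
  next
    case False
    then have "a \<in> {0<..1}" using a by auto
    then show ?thesis using a M[of a] good_lower[OF g1] good_lower[OF g2] by auto
  qed
qed

lemma fdist_ge:
  assumes g1: "good w F G" and g2: "good w' F' G'" and a: "a \<in> {0<..1}"
  shows "\<bar>F a - F' a\<bar> \<le> fdist w w'" "\<bar>G a - G' a\<bar> \<le> fdist w w'"
proof -
  have Q1: "QQ F G" and Q2: "QQ F' G'" using g1 g2 unfolding good_def by auto
  obtain B1 where B1: "\<forall>a\<in>{0<..1}. \<bar>F a\<bar> \<le> B1 \<and> \<bar>G a\<bar> \<le> B1" using QQ_bounds(3)[OF Q1] by blast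
  obtain B2 where B2: "\<forall>a\<in>{0<..1}. \<bar>F' a\<bar> \<le> B2 \<and> \<bar>G' a\<bar> \<le> B2" using QQ_bounds(3)[OF Q2] by blast
  let ?h = "\<lambda>a. max \<bar>lower w a - lower w' a\<bar> \<bar>upper w a - upper w' a\<bar>"
  have "bdd_above (?h ` {0..1})"
  proof (rule bdd_aboveI[of _ "max (?h 0) (B1 + B2)"])
    fix x assume "x \<in> ?h ` {0..1}"
    then obtain b where b: "b \<in> {0..1}" "x = ?h b" by auto
    show "x \<le> max (?h 0) (B1 + B2)"
    proof (cases "b = 0")
      case False
      then have b': "b \<in> {0<..1}" using b by auto
      then have "\<bar>F b\<bar> \<le> B1" "\<bar>G b\<bar> \<le> B1" "\<bar>F' b\<bar> \<le> B2" "\<bar>G' b\<bar> \<le> B2" using B1 B2 by auto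
      then have "\<bar>F b - F' b\<bar> \<le> B1 + B2" "\<bar>G b - G' b\<bar> \<le> B1 + B2" by linarith+
      then have "x \<le> B1 + B2" using b b' good_lower[OF g1] good_lower[OF g2] by auto
      then show ?thesis by (rule order_trans[OF _ max.cobounded2])
    qed (use b in auto)
  qed
  then have "?h a \<le> fdist w w'" unfolding fdist_def using a by (intro cSup_upper) auto
  then show "\<bar>F a - F' a\<bar> \<le> fdist w w'" "\<bar>G a - G' a\<bar> \<le> fdist w w'"
    using a good_lower[OF g1] good_lower[OF g2] by auto
qed

lemma good_fsum:
  assumes "\<And>k. k \<le> n \<Longrightarrow> good (f k) (Fs k) (Gs k)"
  shows "good (fsum f n) (\<lambda>a. \<Sum>k\<le>n. Fs k a) (\<lambda>a. \<Sum>k\<le>n. Gs k a)"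
  using assms
proof (induction n)
  case 0 then show ?case by simp
next
  case (Suc n)
  have "good (fsum f n \<oplus> f (Suc n)) (\<lambda>a. (\<Sum>k\<le>n. Fs k a) + Fs (Suc n) a) (\<lambda>a. (\<Sum>k\<le>n. Gs k a) + Gs (Suc n) a)"
    using good_add[OF Suc(1) Suc(2)] Suc(2) by simp
  then show ?case by simp
qed



lemma poly_exp_lim: "0 < q \<Longrightarrow> q < (1::real) \<Longrightarrow> (\<lambda>n. real n ^ k * q ^ n) \<longlonglongrightarrow> 0"
  by real_asymp

lemma wk_lim:
  fixes p :: real assumes p: "0 < p"
  shows "(\<lambda>n. real (n choose k) * p ^ (n - k) / (p + 1) ^ n) \<longlonglongrightarrow> 0"
proof -
  define q where "q = p / (p + 1)"
  have q: "0 < q" "q < 1" using p unfolding q_def by auto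
  have g: "(\<lambda>n. real n ^ k * q ^ n / p ^ k) \<longlonglongrightarrow> 0"
    by (intro tendsto_divide_zero poly_exp_lim q)
  show ?thesis
  proof (rule Lim_null_comparison[OF _ g])
    show "\<forall>\<^sub>F n in sequentially. norm (real (n choose k) * p ^ (n - k) / (p + 1) ^ n) \<le> real n ^ k * q ^ n / p ^ k"
      using eventually_ge_at_top[of k]
    proof eventually_elim
      case (elim n)
      have "p ^ (n - k) = p ^ n / p ^ k" using elim p by (simp add: power_diff)
      then have eq: "real (n choose k) * p ^ (n - k) / (p + 1) ^ n = real (n choose k) * (q ^ n / p ^ k)"
        unfolding q_def by (simp add: power_divide)
      have "real (n choose k) \<le> real n ^ k" using binomial_le_pow[OF elim] by (metis of_nat_le_iff of_nat_power)
      then have "real (n choose k) * (q ^ n / p ^ k) \<le> real n ^ k * (q ^ n / p ^ k)"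
        using q p by (intro mult_right_mono) auto
      moreover have "norm (real (n choose k) * p ^ (n - k) / (p + 1) ^ n) = real (n choose k) * p ^ (n - k) / (p + 1) ^ n"
        using p by simp
      ultimately show ?case using eq by simp
    qed
  qed
qed

lemma euler_reg:
  fixes p :: real and d :: "nat \<Rightarrow> real"
  assumes p: "0 < p" and d0: "\<And>k. 0 \<le> d k" and dl: "d \<longlonglongrightarrow> 0"
  shows "(\<lambda>n. (\<Sum>k\<le>n. real (n choose k) * p ^ (n - k) / (p + 1) ^ n * d k)) \<longlonglongrightarrow> 0"
proof (rule LIMSEQ_I)
  fix r :: real assume r: "0 < r"
  define w where "w n k = real (n choose k) * p ^ (n - k) / (p + 1) ^ n" for n k
  have w0: "0 \<le> w n k" for n k unfolding w_def using p by auto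
  have w1: "(\<Sum>k\<le>n. w n k) = 1" for n
  proof -
    have "(p + 1) ^ n = (\<Sum>k\<le>n. real (n choose k) * p ^ (n - k))"
      using binomial_ring[of 1 p n] by (simp add: add.commute)
    moreover have "(\<Sum>k\<le>n. w n k) = (\<Sum>k\<le>n. real (n choose k) * p ^ (n - k)) / (p + 1) ^ n"
      unfolding w_def by (simp add: sum_divide_distrib)
    moreover have "(p + 1) ^ n > 0" using p by simp
    ultimately show ?thesis by simp
  qed
  obtain N where N0: "\<forall>k\<ge>N. norm (d k - 0) < r/2"
    using LIMSEQ_D[OF dl, of "r/2"] r by auto
  have N: "\<And>k. k \<ge> N \<Longrightarrow> d k < r/2" using N0 by auto
  have wl: "(\<lambda>n. w n k * d k) \<longlonglongrightarrow> 0" for k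
    using tendsto_mult_left_zero[OF wk_lim[OF p, of k]] unfolding w_def .
  have "(\<lambda>n. \<Sum>k<N. w n k * d k) \<longlonglongrightarrow> 0"
    by (rule tendsto_null_sum) (rule wl)
  then obtain N2 where N2: "\<And>n. n \<ge> N2 \<Longrightarrow> \<bar>\<Sum>k<N. w n k * d k\<bar> < r/2"
    using LIMSEQ_D[of _ 0 "r/2"] r by fastforce
  show "\<exists>no. \<forall>n\<ge>no. norm ((\<Sum>k\<le>n. real (n choose k) * p ^ (n - k) / (p + 1) ^ n * d k) - 0) < r"
  proof (intro exI[of _ "max N N2"] allI impI)
    fix n assume n: "max N N2 \<le> n"
    define g where "g k = (if k < N then d k else 0)" for k
    have "(\<Sum>k\<le>n. w n k * d k) \<le> (\<Sum>k\<le>n. w n k * (g k + r/2))"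
    proof (intro sum_mono mult_left_mono w0)
      fix k
      show "d k \<le> g k + r/2"
      proof (cases "k < N")
        case False then show ?thesis using N[of k] by (simp add: g_def)
      qed (use r in \<open>simp add: g_def\<close>)
    qed
    also have "\<dots> = (\<Sum>k\<le>n. w n k * g k) + r/2 * (\<Sum>k\<le>n. w n k)"
      by (simp add: distrib_left sum.distrib sum_distrib_left mult.commute)
    also have "(\<Sum>k\<le>n. w n k * g k) = (\<Sum>k<N. w n k * g k)"
      using n by (intro sum.mono_neutral_right) (auto simp: g_def)
    also have "\<dots> = (\<Sum>k<N. w n k * d k)" by (intro sum.cong) (auto simp: g_def)
    finally have "(\<Sum>k\<le>n. w n k * d k) \<le> (\<Sum>k<N. w n k * d k) + r/2" using w1 by simp
    moreover have "(\<Sum>k<N. w n k * d k) < r/2" using N2[of n] n by auto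
    moreover have "0 \<le> (\<Sum>k\<le>n. w n k * d k)" using w0 d0 by (intro sum_nonneg) auto
    ultimately show "norm ((\<Sum>k\<le>n. real (n choose k) * p ^ (n - k) / (p + 1) ^ n * d k) - 0) < r"
      unfolding w_def by simp
  qed
qed



lemma w_sum1:
  fixes p :: real assumes p: "0 < p"
  shows "(\<Sum>k\<le>n. real (n choose k) * p ^ (n - k) / (p + 1) ^ n) = 1"
proof -
  have "(p + 1) ^ n = (\<Sum>k\<le>n. real (n choose k) * p ^ (n - k))"
    using binomial_ring[of 1 p n] by (simp add: add.commute)
  moreover have "(\<Sum>k\<le>n. real (n choose k) * p ^ (n - k) / (p + 1) ^ n) = (\<Sum>k\<le>n. real (n choose k) * p ^ (n - k)) / (p + 1) ^ n"
    by (simp add: sum_divide_distrib)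
  moreover have "(p + 1) ^ n > 0" using p by simp
  ultimately show ?thesis by simp
qed

lemma wsum_bound:
  fixes w x d :: "nat \<Rightarrow> real"
  assumes "(\<Sum>k\<le>n. w k) = 1" "\<And>k. 0 \<le> w k" "\<And>k. k \<le> n \<Longrightarrow> \<bar>x k - y\<bar> \<le> d k"
  shows "\<bar>(\<Sum>k\<le>n. w k * x k) - y\<bar> \<le> (\<Sum>k\<le>n. w k * d k)"
proof -
  have "(\<Sum>k\<le>n. w k * x k) - y = (\<Sum>k\<le>n. w k * (x k - y))"
    using assms(1) by (simp add: right_diff_distrib sum_subtractf flip: sum_distrib_right)
  also have "\<bar>\<dots>\<bar> \<le> (\<Sum>k\<le>n. \<bar>w k * (x k - y)\<bar>)" by (rule sum_abs)
  also have "\<dots> \<le> (\<Sum>k\<le>n. w k * d k)"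
    using assms(2,3) by (intro sum_mono) (simp add: abs_mult mult_left_mono)
  finally show ?thesis .
qed

theorem mainTheorem1:
  fixes u :: "nat \<Rightarrow> fuzzy" and \<nu> :: fuzzy and p :: real
  assumes "0 < p"
    and "\<And>n. fuzzy_number (u n)"
    and "fuzzy_number \<nu>"
    and "series_converges u \<nu>"
  shows "euler_summable_series p u \<nu>"
proof -
  let ?s = "partial_sums u"
  define LS where "LS k a = (\<Sum>j\<le>k. lower (u j) a)" for k a
  define RS where "RS k a = (\<Sum>j\<le>k. upper (u j) a)" for k a
  have gu: "good (u j) (lower (u j)) (upper (u j))" for j using good_fn assms(2) by blast
  have gs: "good (?s k) (LS k) (RS k)" for k
    unfolding partial_sums_def LS_def[abs_def] RS_def[abs_def]
    by (rule good_fsum) (rule gu)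
  have gv: "good \<nu> (lower \<nu>) (upper \<nu>)" using good_fn assms(3) by blast
  define w where "w n k = real (n choose k) * p ^ (n - k) / (p + 1) ^ n" for n k
  have w0: "0 \<le> w n k" for n k unfolding w_def using assms(1) by auto
  have w1: "(\<Sum>k\<le>n. w n k) = 1" for n unfolding w_def using w_sum1[OF assms(1)] .
  define Lt where "Lt n a = (\<Sum>k\<le>n. w n k * LS k a)" for n a
  define Rt where "Rt n a = (\<Sum>k\<le>n. w n k * RS k a)" for n a
  have gt: "good (euler_mean p ?s n) (Lt n) (Rt n)" for n
  proof -
    have "good (fsum (\<lambda>k. (real (n choose k) * p ^ (n - k)) \<odot> ?s k) n)
        (\<lambda>a. \<Sum>k\<le>n. real (n choose k) * p ^ (n - k) * LS k a) (\<lambda>a. \<Sum>k\<le>n. real (n choose k) * p ^ (n - k) * RS k a)"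
    proof (rule good_fsum)
      fix k assume "k \<le> n"
      then have "0 < real (n choose k) * p ^ (n - k)" using assms(1) by auto
      then show "good ((real (n choose k) * p ^ (n - k)) \<odot> ?s k) (\<lambda>a. real (n choose k) * p ^ (n - k) * LS k a) (\<lambda>a. real (n choose k) * p ^ (n - k) * RS k a)"
        using good_scale[OF gs] by blast
    qed
    from good_scale[OF this, of "1 / (p + 1) ^ n"] assms(1)
    have "good (euler_mean p ?s n) (\<lambda>a. 1 / (p + 1) ^ n * (\<Sum>k\<le>n. real (n choose k) * p ^ (n - k) * LS k a))
        (\<lambda>a. 1 / (p + 1) ^ n * (\<Sum>k\<le>n. real (n choose k) * p ^ (n - k) * RS k a))"
      unfolding euler_mean_def by simp
    moreover have "(\<lambda>a. 1 / (p + 1) ^ n * (\<Sum>k\<le>n. real (n choose k) * p ^ (n - k) * LS k a)) = Lt n"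
      "(\<lambda>a. 1 / (p + 1) ^ n * (\<Sum>k\<le>n. real (n choose k) * p ^ (n - k) * RS k a)) = Rt n"
      unfolding Lt_def Rt_def w_def by (auto simp: sum_distrib_left)
    ultimately show ?thesis by simp
  qed
  define d where "d k = fdist (?s k) \<nu>" for k
  have dk: "\<bar>LS k a - lower \<nu> a\<bar> \<le> d k" "\<bar>RS k a - upper \<nu> a\<bar> \<le> d k" if "a \<in> {0<..1}" for k a
    using fdist_ge[OF gs gv that] unfolding d_def by auto
  have d0: "0 \<le> d k" for k using dk(1)[of 1 k] by auto
  have dl: "d \<longlonglongrightarrow> 0" using assms(4) unfolding series_converges_def fconverges_def d_def .
  define e where "e n = (\<Sum>k\<le>n. real (n choose k) * p ^ (n - k) / (p + 1) ^ n * d k)" for n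
  have el: "e \<longlonglongrightarrow> 0" unfolding e_def by (rule euler_reg[OF assms(1) d0 dl])
  have bnd: "fdist (euler_mean p ?s n) \<nu> \<le> e n" for n
  proof (rule fdist_le[OF gt gv])
    fix a :: real assume a: "a \<in> {0<..1}"
    have "e n = (\<Sum>k\<le>n. w n k * d k)" unfolding e_def w_def ..
    then show "\<bar>Lt n a - lower \<nu> a\<bar> \<le> e n \<and> \<bar>Rt n a - upper \<nu> a\<bar> \<le> e n"
      unfolding Lt_def Rt_def using wsum_bound[OF w1 w0 dk(1)[OF a]] wsum_bound[OF w1 w0 dk(2)[OF a]]
      by simp
  qed
  have f0: "0 \<le> fdist (euler_mean p ?s n) \<nu>" for n
    using fdist_ge(1)[OF gt gv, of 1] by (smt (verit) greaterThanAtMost_iff zero_less_one order_refl)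
  have "(\<lambda>n. fdist (euler_mean p ?s n) \<nu>) \<longlonglongrightarrow> 0"
    by (rule tendsto_sandwich[OF _ _ tendsto_const el]) (use f0 bnd in auto)
  then show ?thesis unfolding euler_summable_series_def fconverges_def .
qed

end
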